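(* Let $(\bar\xi,\bar x)\in\operatorname{gph}E$ and $\rho>0$. Let $\xi\in\mathbb B(\bar\xi,\rho)$ and suppose that: (i) for every $z\in K(\xi)$ the function $x\mapsto f(\xi,x,z)$ is $C$-u.s.c.; (ii) there exists $x_{0,\xi}\in K(\xi)$ such that $f(\xi,x_{0,\xi},K(\xi))$ is $C$-bounded; (iii) there exists $\gamma>0$ such that $$\big[\partial_x\nu(\xi,x)+N^\flat(x;K(\xi))\big]\cap\gamma\mathbb B=\emptyset\quad\text{for all }x\in\mathbb R^n\setminus E(\xi).$$ Then $E(\xi)\neq\emptyset$ and $\operatorname{dist}(x,E(\xi))\le\mathfrak m(\xi,x)/\gamma$ for all $x\in\mathbb R^n$.
   Context: $C\subset\mathbb R^m$ nontrivial closed convex pointed cone; $K:\mathbb R^p\rightrightarrows\mathbb R^n$ has closed graph and nonempty values everywhere. VEP($\xi$): find $x\in K(\xi)$ with $f(\xi,x,z)\in C$ for all $z\in K(\xi)$; $E(\xi)$ its solution set. $\nu(\xi,x)=\sup_{z\in K(\xi)}\operatorname{dist}(f(\xi,x,z),C)$, $\mu(\xi,x)=\operatorname{dist}(x,K(\xi))$, $\mathfrak m=\nu+\mu$. A set $S\subseteq\mathbb R^m$ is $C$-bounded if $S\setminus C$ is bounded. $g$ is $C$-u.s.c. at $x_0$ if for every neighbourhood $V$ of $g(x_0)$ there is a neighbourhood $U$ of $x_0$ with $g(x)\in V-C$ on $U$. $\Pi(x;S)$ is the Euclidean projection set; basic normal cone $N(\bar x;S)=\operatorname{Limsup}_{x\to\bar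 x}\operatorname{cone}[x-\Pi(x;S)]$; basic subdifferential $\partial\psi(\bar x)=\{v:(v,-1)\in N((\bar x,\psi(\bar x));\operatorname{epi}\psi)\}$; $\partial_x\nu(\xi,x)$ is the basic subdifferential of $\nu(\xi,\cdot)$ at $x$. Unit truncation map: $N^\flat(x;K(\xi))=N(x;K(\xi))\cap\mathbb B$ if $x\in K(\xi)$, and $N^\flat(x;K(\xi))=\{(x-z)/\operatorname{dist}(x,K(\xi)):z\in\Pi(x;K(\xi))\}$ if $x\notin K(\xi)$. $\mathbb B$ is the closed unit ball. *)

theory Defs
  imports "HOL-Analysis.Analysis"
begin

definition proj_set :: "'a::euclidean_space \<Rightarrow> 'a set \<Rightarrow> 'a set" where
  "proj_set x S = {z \<in> S. dist x z = infdist x S}"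

definition cone_gen :: "'a::real_vector set \<Rightarrow> 'a set" where
  "cone_gen A = {t *\<^sub>R a | t a. 0 \<le> t \<and> a \<in> A}"

text \<open>Basic (limiting) normal cone: Painleve-Kuratowski outer limit of cone[x - Pi(x;S)] as x \<rightarrow> xbar.\<close>
definition basic_normal_cone :: "'a::euclidean_space \<Rightarrow> 'a set \<Rightarrow> 'a set" where
  "basic_normal_cone xbar S =
     {v. \<exists>xs vs. xs \<longlonglongrightarrow> xbar \<and> vs \<longlonglongrightarrow> v \<and>
          (\<forall>k. vs k \<in> cone_gen {xs k - z | z. z \<in> proj_set (xs k) S})}"

definition epi :: "('a \<Rightarrow> ereal) \<Rightarrow> ('a \<times> real) set" where
  "epi \<psi> = {(x, t). \<psi> x \<le> ereal t}"

definition basic_subdiff :: "('a::euclidean_space \<Rightarrow> ereal) \<Rightarrow> 'a \<Rightarrow> 'a set" where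
  "basic_subdiff \<psi> xbar =
     {v. \<bar>\<psi> xbar\<bar> \<noteq> \<infinity> \<and>
         (v, -1) \<in> basic_normal_cone (xbar, real_of_ereal (\<psi> xbar)) (epi \<psi>)}"

definition trunc_normal :: "'a::euclidean_space \<Rightarrow> 'a set \<Rightarrow> 'a set" where
  "trunc_normal x S =
     (if x \<in> S then basic_normal_cone x S \<inter> cball 0 1
      else {(x - z) /\<^sub>R infdist x S | z. z \<in> proj_set x S})"

definition pointed_cone :: "'a::real_vector set \<Rightarrow> bool" where
  "pointed_cone C \<longleftrightarrow> cone C \<and> C \<inter> uminus ` C = {0}"

definition C_bounded :: "'c::real_normed_vector set \<Rightarrow> 'c set \<Rightarrow> bool" where
  "C_bounded C S \<longleftrightarrow> bounded (S - C)"

definition C_usc_at :: "'c::real_normed_vector set \<Rightarrow> ('b::topological_space \<Rightarrow> 'c) \<Rightarrow> 'b \<Rightarrow> bool" where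
  "C_usc_at C g x0 \<longleftrightarrow>
     (\<forall>V. open V \<and> g x0 \<in> V \<longrightarrow>
        (\<exists>U. open U \<and> x0 \<in> U \<and> (\<forall>x\<in>U. g x \<in> {v - c | v c. v \<in> V \<and> c \<in> C})))"

definition VEP_sol :: "'c set \<Rightarrow> ('a \<Rightarrow> 'b set) \<Rightarrow> ('a \<Rightarrow> 'b \<Rightarrow> 'b \<Rightarrow> 'c) \<Rightarrow> 'a \<Rightarrow> 'b set" where
  "VEP_sol C K f \<xi> = {x \<in> K \<xi>. \<forall>z \<in> K \<xi>. f \<xi> x z \<in> C}"

definition gap_nu :: "'c::metric_space set \<Rightarrow> ('a \<Rightarrow> 'b set) \<Rightarrow> ('a \<Rightarrow> 'b \<Rightarrow> 'b \<Rightarrow> 'c) \<Rightarrow> 'a \<Rightarrow> 'b \<Rightarrow> ereal" where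
  "gap_nu C K f \<xi> x = (SUP z \<in> K \<xi>. ereal (infdist (f \<xi> x z) C))"

definition gap_mu :: "('a \<Rightarrow> 'b::metric_space set) \<Rightarrow> 'a \<Rightarrow> 'b \<Rightarrow> real" where
  "gap_mu K \<xi> x = infdist x (K \<xi>)"

definition gap_m :: "'c::metric_space set \<Rightarrow> ('a \<Rightarrow> 'b::metric_space set) \<Rightarrow> ('a \<Rightarrow> 'b \<Rightarrow> 'b \<Rightarrow> 'c) \<Rightarrow> 'a \<Rightarrow> 'b \<Rightarrow> ereal" where
  "gap_m C K f \<xi> x = gap_nu C K f \<xi> x + ereal (gap_mu K \<xi> x)"

end

theory Submission
  imports Defs
begin


definition lscr :: "('a::metric_space \<Rightarrow> real) \<Rightarrow> bool" where
 "lscr F \<longleftrightarrow> (\<forall>ys y c. ys \<longlonglongrightarrow> y \<longrightarrow> c < F y \<longrightarrow> (\<forall>\<^sub>F j in sequentially. c < F (ys j)))"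

lemma lscr_le_lim:
  assumes "lscr F" "ys \<longlonglongrightarrow> y" "\<And>j. F (ys j) \<le> h j" "h \<longlonglongrightarrow> L"
  shows "F y \<le> L"
proof (rule ccontr)
  assume "\<not> F y \<le> L"
  define c where "c = (F y + L)/2"
  have "c < F y" "L < c" using \<open>\<not> F y \<le> L\<close> by (auto simp: c_def)
  have e1: "\<forall>\<^sub>F j in sequentially. c < F (ys j)" using assms(1,2) \<open>c < F y\<close> unfolding lscr_def by blast
  have e2: "\<forall>\<^sub>F j in sequentially. h j < c" using order_tendstoD(2)[OF assms(4) \<open>L < c\<close>] .
  have aux: "\<And>j. c < F (ys j) \<Longrightarrow> h j < c \<Longrightarrow> False"
  proof -
    fix j assume "c < F (ys j)" "h j < c"
    moreover have "F (ys j) \<le> h j" by (rule assms(3))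
    ultimately show False by linarith
  qed
  have "\<forall>\<^sub>F j in sequentially. False" using eventually_conj[OF e1 e2]
    by (rule eventually_mono) (use aux in blast)
  then show False by simp
qed

lemma lscr_add_cont:
  assumes "lscr F" "continuous_on UNIV g"
  shows "lscr (\<lambda>a. F a + g a)"
  unfolding lscr_def
proof (intro allI impI)
  fix ys y c assume ys: "ys \<longlonglongrightarrow> y" and c: "c < F y + g y"
  define e where "e = (F y + g y - c)/2"
  have e: "e > 0" using c by (simp add: e_def)
  have e2e: "c = F y + g y - 2*e" by (simp add: e_def field_simps)
  have e1: "\<forall>\<^sub>F j in sequentially. F y - e < F (ys j)" using assms(1) ys e unfolding lscr_def by simp
  have "(\<lambda>j. g (ys j)) \<longlonglongrightarrow> g y"
    using continuous_on_tendsto_compose[OF assms(2) ys] by simp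
  then have e2: "\<forall>\<^sub>F j in sequentially. g y - e < g (ys j)" using order_tendstoD(1)[of _ "g y" sequentially "g y - e"] e by simp
  show "\<forall>\<^sub>F j in sequentially. c < F (ys j) + g (ys j)"
    using eventually_conj[OF e1 e2] by (rule eventually_mono) (use e2e in \<open>elim conjE; linarith\<close>)
qed

lemma lscr_comp:
  assumes "lscr F" "continuous_on UNIV h"
  shows "lscr (\<lambda>a. F (h a))"
  unfolding lscr_def
proof (intro allI impI)
  fix ys y c assume ys: "ys \<longlonglongrightarrow> y" and c: "c < F (h y)"
  have "(\<lambda>j. h (ys j)) \<longlonglongrightarrow> h y"
    using continuous_on_tendsto_compose[OF assms(2) ys] by simp
  then show "\<forall>\<^sub>F j in sequentially. c < F (h (ys j))" using assms(1) c unfolding lscr_def by blast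
qed

lemma lscr_min:
  fixes F :: "'a::euclidean_space \<Rightarrow> real"
  assumes "lscr F" "\<And>a. 0 \<le> F a" "compact S" "{a. F a \<le> F a0} \<subseteq> S"
  shows "\<exists>a. \<forall>b. F a \<le> F b"
proof -
  define m where "m = Inf (range F)"
  have bdd: "bdd_below (range F)" unfolding bdd_below_def using assms(2) by blast
  have mle: "\<And>b. m \<le> F b" unfolding m_def using bdd by (simp add: cInf_lower)
  show ?thesis
  proof (cases "F a0 = m")
    case True then show ?thesis using mle by auto
  next
    case False
    then have "m < F a0" using mle[of a0] by simp
    have "\<forall>j. \<exists>a. F a < min (m + 1/(Suc j)) (F a0)"
    proof
      fix j
      have "m < min (m + 1/(Suc j)) (F a0)" using \<open>m < F a0\<close> by simp
      then show "\<exists>a. F a < min (m + 1/(Suc j)) (F a0)"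
        using cInf_lessD[of "range F" "min (m + 1/(Suc j)) (F a0)"] unfolding m_def by auto
    qed
    then obtain A where A: "\<And>j. F (A j) < min (m + 1/(Suc j)) (F a0)" by metis
    have "\<forall>j. A j \<in> S"
    proof
      fix j
      have "F (A j) \<le> F a0" using A[of j] by simp
      then show "A j \<in> S" using assms(4) by blast
    qed
    then obtain l r where l: "l \<in> S" "strict_mono r" "(A \<circ> r) \<longlonglongrightarrow> l"
      using seq_compactE[OF compact_imp_seq_compact[OF assms(3)] \<open>\<forall>j. A j \<in> S\<close>] by blast
    have "F l \<le> m"
    proof (rule lscr_le_lim[OF assms(1) l(3)])
      show "\<And>j. F ((A \<circ> r) j) \<le> m + 1/(Suc j)"
      proof -
        fix j
        have "j \<le> r j" using seq_suble[OF l(2)] by simp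
        then have "1/real (Suc (r j)) \<le> 1/(Suc j)" by (simp add: frac_le)
        then show "F ((A \<circ> r) j) \<le> m + 1/(Suc j)" using A[of "r j"] by simp
      qed
      show "(\<lambda>j. m + 1 / real (Suc j)) \<longlonglongrightarrow> m"
        using tendsto_add[OF tendsto_const LIMSEQ_inverse_real_of_nat] by (simp add: inverse_eq_divide)
    qed
    then show ?thesis using mle by (meson order_trans)
  qed
qed



lemma sqdiff: "(norm (a - c))^2 - (norm (b - c))^2 = -2*((a-c) \<bullet> (b-a)) - (norm (b-a))^2"
  for a b c :: "'a::real_inner"
  by (simp add: power2_norm_eq_inner algebra_simps inner_commute)

lemma nds: "(norm (a - b))^2 = (norm a)^2 - 2*(a \<bullet> b) + (norm b)^2"
  for a b :: "'a::real_inner"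
  by (simp add: power2_norm_eq_inner inner_diff_left inner_diff_right inner_commute)

lemma infdist_eq_dist:
  assumes "a \<in> A" "\<And>b. b \<in> A \<Longrightarrow> dist x a \<le> dist x b"
  shows "infdist x A = dist x a"
proof (rule antisym)
  show "infdist x A \<le> dist x a" using assms(1) by (rule infdist_le)
  have "A \<noteq> {}" using assms(1) by auto
  show "dist x a \<le> infdist x A" using assms unfolding infdist_notempty[OF \<open>A \<noteq> {}\<close>]
    by (intro cINF_greatest) auto
qed

lemma epi_prox:
  fixes N :: "'b::euclidean_space \<Rightarrow> ereal"
  assumes "N y0 = ereal a" "0 < t" "2*t*\<sigma> \<le> 1"
    and ineq: "\<And>y. ereal (a + v \<bullet> (y - y0) - \<sigma> * (norm (y-y0))^2) \<le> N y"
  shows "(v, -1) \<in> cone_gen {((y0,a) + t *\<^sub>R (v,-1)) - z | z. z \<in> proj_set ((y0,a) + t *\<^sub>R (v,-1)) (epi N)}"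
proof -
  define p where "p = (y0,a) + t *\<^sub>R (v,-1::real)"
  have p: "p = (y0 + t *\<^sub>R v, a - t)" by (simp add: p_def)
  have mem: "(y0,a) \<in> epi N" using assms(1) by (simp add: epi_def)
  have le: "dist p (y0,a) \<le> dist p z" if "z \<in> epi N" for z
  proof -
    obtain y r where z: "z = (y,r)" by fastforce
    have "N y \<le> ereal r" using that z by (simp add: epi_def)
    then have r: "a + v \<bullet> (y - y0) - \<sigma> * (norm (y-y0))^2 \<le> r" using ineq[of y] by (metis ereal_less_eq(3) order_trans)
    define d where "d = y - y0"
    define \<alpha> where "\<alpha> = r - a"
    have r': "v \<bullet> d - \<sigma> * (norm d)^2 \<le> \<alpha>" using r by (simp add: d_def \<alpha>_def)
    have h1: "2*t*(v \<bullet> d) - 2*t*\<sigma> * (norm d)^2 \<le> 2*t*\<alpha>"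
      using mult_left_mono[OF r', of "2*t"] assms(2) by (simp add: algebra_simps)
    have h2: "2*t*\<sigma> * (norm d)^2 \<le> (norm d)^2" using mult_right_mono[OF assms(3), of "(norm d)^2"] by simp
    have e1: "(dist (y0 + t *\<^sub>R v) y)^2 = t^2 * (norm v)^2 - 2*t*(v \<bullet> d) + (norm d)^2"
    proof -
      have eq: "y0 + t *\<^sub>R v - y = t *\<^sub>R v - d" by (simp add: d_def algebra_simps)
      have "(dist (y0 + t *\<^sub>R v) y)^2 = (norm (t *\<^sub>R v - d))^2" unfolding dist_norm eq ..
      also have "\<dots> = t^2 * (norm v)^2 - 2*t*(v \<bullet> d) + (norm d)^2" unfolding nds by (simp add: power_mult_distrib)
      finally show ?thesis .
    qed
    have e2: "(dist (y0 + t *\<^sub>R v) y0)^2 = t^2 * (norm v)^2"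
      by (simp add: dist_norm power_mult_distrib)
    have "(dist (y0 + t *\<^sub>R v) y0)^2 + (dist (a - t) a)^2 \<le> (dist (y0 + t *\<^sub>R v) y)^2 + (dist (a-t) r)^2"
    proof -
      have "(dist (a - t) a)^2 = t^2" by (simp add: dist_real_def)
      moreover have "(dist (a-t) r)^2 = t^2 + 2*t*\<alpha> + \<alpha>^2" by (simp add: dist_real_def \<alpha>_def power2_eq_square algebra_simps)
      moreover have "0 \<le> \<alpha>^2" by simp
      ultimately show ?thesis using e1 e2 h1 h2 by linarith
    qed
    then show ?thesis unfolding p z dist_Pair_Pair by (simp add: real_sqrt_le_iff)
  qed
  have "(y0,a) \<in> proj_set p (epi N)"
    unfolding proj_set_def using mem le infdist_eq_dist[of "(y0,a)" "epi N" p] by auto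
  moreover have "(v, -1) = (1/t) *\<^sub>R (p - (y0,a))" using assms(2) by (simp add: p_def)
  ultimately have "(v, -1) = (1/t) *\<^sub>R (p - (y0,a)) \<and> 0 \<le> 1/t \<and> p - (y0,a) \<in> {p - z | z. z \<in> proj_set p (epi N)}"
    using assms(2) by auto
  then show ?thesis unfolding cone_gen_def p_def by blast
qed

lemma set_prox:
  fixes K :: "'b::euclidean_space set"
  assumes "w \<in> K" "0 < t" "2*t*\<sigma> \<le> 1"
    and ineq: "\<And>z. z \<in> K \<Longrightarrow> \<zeta> \<bullet> (z - w) \<le> \<sigma> * (norm (z-w))^2"
  shows "\<zeta> \<in> cone_gen {(w + t *\<^sub>R \<zeta>) - z | z. z \<in> proj_set (w + t *\<^sub>R \<zeta>) K}"
proof -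
  define q where "q = w + t *\<^sub>R \<zeta>"
  have le: "dist q w \<le> dist q z" if "z \<in> K" for z
  proof -
    define d where "d = z - w"
    have r': "\<zeta> \<bullet> d \<le> \<sigma> * (norm d)^2" using ineq[OF that] by (simp add: d_def)
    have h1: "2*t*(\<zeta> \<bullet> d) \<le> 2*t*\<sigma> * (norm d)^2"
      using mult_left_mono[OF r', of "2*t"] assms(2) by (simp add: algebra_simps)
    have h2: "2*t*\<sigma> * (norm d)^2 \<le> (norm d)^2" using mult_right_mono[OF assms(3), of "(norm d)^2"] by simp
    have e1: "(dist q z)^2 = t^2 * (norm \<zeta>)^2 - 2*t*(\<zeta> \<bullet> d) + (norm d)^2"
    proof -
      have eq: "q - z = t *\<^sub>R \<zeta> - d" by (simp add: d_def q_def algebra_simps)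
      have "(dist q z)^2 = (norm (t *\<^sub>R \<zeta> - d))^2" unfolding dist_norm eq ..
      also have "\<dots> = t^2 * (norm \<zeta>)^2 - 2*t*(\<zeta> \<bullet> d) + (norm d)^2" unfolding nds by (simp add: power_mult_distrib)
      finally show ?thesis .
    qed
    have e2: "(dist q w)^2 = t^2 * (norm \<zeta>)^2"
      by (simp add: q_def dist_norm power_mult_distrib)
    have "(dist q w)^2 \<le> (dist q z)^2" using e1 e2 h1 h2 by linarith
    then show ?thesis by (simp add: power2_le_iff_abs_le)
  qed
  have "w \<in> proj_set q K"
    unfolding proj_set_def using assms(1) le infdist_eq_dist[of w K q] by auto
  moreover have "\<zeta> = (1/t) *\<^sub>R (q - w)" using assms(2) by (simp add: q_def)
  ultimately have "\<zeta> = (1/t) *\<^sub>R (q - w) \<and> 0 \<le> 1/t \<and> q - w \<in> {q - z | z. z \<in> proj_set q K}"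
    using assms(2) by auto
  then show ?thesis unfolding cone_gen_def q_def by blast
qed

lemma lip_bound:
  fixes \<zeta> :: "'b::real_inner"
  assumes "\<sigma> > 0" "L \<ge> 0"
    and ineq: "\<And>w'. g w + \<zeta> \<bullet> (w' - w) - \<sigma> * (norm (w' - w))^2 \<le> g w'"
    and lip: "\<And>w'. g w' - g w \<le> L * norm (w' - w)"
  shows "norm \<zeta> \<le> L"
proof (rule ccontr)
  assume "\<not> norm \<zeta> \<le> L"
  define n where "n = norm \<zeta>"
  have nL: "L < n" using \<open>\<not> norm \<zeta> \<le> L\<close> by (simp add: n_def)
  then have npos: "n > 0" using assms(2) by simp
  define s where "s = (n - L)/(2*\<sigma>*n)"
  have spos: "s > 0" using nL npos assms(1) by (simp add: s_def)
  have a: "\<zeta> \<bullet> (s *\<^sub>R \<zeta>) = s * n^2" by (simp add: n_def power2_norm_eq_inner)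
  have b: "(norm (s *\<^sub>R \<zeta>))^2 = s^2 * n^2" using spos by (simp add: n_def power_mult_distrib)
  have c: "norm (s *\<^sub>R \<zeta>) = s * n" using spos by (simp add: n_def)
  have i1: "g w + \<zeta> \<bullet> (s *\<^sub>R \<zeta>) - \<sigma> * (norm (s *\<^sub>R \<zeta>))^2 \<le> g (w + s *\<^sub>R \<zeta>)"
    using ineq[of "w + s *\<^sub>R \<zeta>"] by (simp only: add_diff_cancel_left')
  have i2: "g (w + s *\<^sub>R \<zeta>) - g w \<le> L * norm (s *\<^sub>R \<zeta>)"
    using lip[of "w + s *\<^sub>R \<zeta>"] by (simp only: add_diff_cancel_left')
  have "s * n^2 - \<sigma> * (s^2 * n^2) \<le> L * (s * n)"
    using i1 i2 unfolding a c power_mult_distrib by linarith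
  then have "(s*n) * (n - \<sigma> * s * n - L) \<le> 0" by (simp add: algebra_simps power2_eq_square)
  then have "n - \<sigma> * s * n - L \<le> 0" using spos npos by (simp add: mult_le_0_iff)
  moreover have "2 * (\<sigma> * s * n) = n - L" using assms(1) npos by (simp add: s_def field_simps)
  ultimately show False using nL by linarith
qed

lemma dist_prox_out:
  fixes K :: "'b::euclidean_space set"
  assumes "closed K" "w \<notin> K" "\<sigma> > 0" "norm \<zeta> \<le> 1" "p \<in> proj_set w K"
    and ineq: "\<And>w'. infdist w K + \<zeta> \<bullet> (w' - w) - \<sigma> * (norm (w' - w))^2 \<le> infdist w' K"
  shows "\<zeta> = (w - p) /\<^sub>R infdist w K"
proof -
  define d where "d = infdist w K"
  have pK: "p \<in> K" and dp: "dist w p = d" using assms(5) by (auto simp: proj_set_def d_def)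
  have "K \<noteq> {}" using pK by auto
  then have dpos: "d > 0" using infdist_pos_not_in_closed assms(1,2) d_def by blast
  define X where "X = \<zeta> \<bullet> (w - p)"
  have key: "d - \<sigma> * s * d^2 \<le> X" if s: "0 < s" "s \<le> 1" for s
  proof -
    define w' where "w' = w + s *\<^sub>R (p - w)"
    have "infdist w' K \<le> dist w' p" using pK by (rule infdist_le)
    also have "dist w' p = (1 - s) * d"
    proof -
      have "w' - p = (1 - s) *\<^sub>R (w - p)" by (simp add: w'_def algebra_simps)
      then show ?thesis using s dp by (simp add: dist_norm)
    qed
    finally have A: "infdist w' K \<le> (1-s)*d" .
    have B: "\<zeta> \<bullet> (w' - w) = - s * X" by (simp add: w'_def X_def inner_diff_right algebra_simps)
    have C: "(norm (w' - w))^2 = s^2 * d^2" using s dp by (simp add: w'_def dist_norm power_mult_distrib norm_minus_commute)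
    have "d - s*X - \<sigma> * (s^2*d^2) \<le> (1-s)*d" using ineq[of w'] A B C d_def by simp
    then have "s * (d - \<sigma> * s * d^2 - X) \<le> 0" by (simp add: algebra_simps power2_eq_square)
    then show ?thesis using s by (simp add: mult_le_0_iff)
  qed
  have Xd: "d \<le> X"
  proof (rule ccontr)
    assume "\<not> d \<le> X"
    define s where "s = min 1 ((d - X)/(2*\<sigma>*d^2))"
    have s: "0 < s" "s \<le> 1" using \<open>\<not> d \<le> X\<close> dpos assms(3) by (auto simp: s_def)
    have "\<sigma> * s * d^2 \<le> (d - X)/2"
    proof -
      have "s \<le> (d - X)/(2*\<sigma>*d^2)" by (simp add: s_def)
      then have "\<sigma> * d^2 * s \<le> \<sigma> * d^2 * ((d - X)/(2*\<sigma>*d^2))"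
        using assms(3) dpos by (intro mult_left_mono) auto
      also have "\<dots> = (d - X)/2" using assms(3) dpos by (simp add: field_simps)
      finally show ?thesis by (simp add: algebra_simps)
    qed
    moreover have "d - \<sigma> * s * d^2 \<le> X" using key[OF s] .
    ultimately have "d - X \<le> (d - X)/2" by linarith
    then show False using \<open>\<not> d \<le> X\<close> by simp
  qed
  define e where "e = (w - p) /\<^sub>R d"
  have ne: "norm e = 1" using dp dpos by (simp add: e_def dist_norm)
  have ze: "\<zeta> \<bullet> e = X / d" by (simp add: e_def X_def divide_inverse mult.commute)
  have "(norm (\<zeta> - e))^2 = (norm \<zeta>)^2 - 2 * (\<zeta> \<bullet> e) + (norm e)^2"
    by (simp add: power2_norm_eq_inner algebra_simps inner_commute)
  also have "\<dots> \<le> 1 - 2 + 1"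
  proof -
    have "(norm \<zeta>)^2 \<le> 1" using assms(4) by (simp add: power_le_one)
    moreover have "1 \<le> X / d" using Xd dpos by simp
    ultimately show ?thesis using ne ze by simp
  qed
  finally have "norm (\<zeta> - e) = 0" by simp
  then show ?thesis by (simp add: e_def d_def)
qed



lemma penalty:
  fixes V :: "'b::euclidean_space \<Rightarrow> real" and N :: "'b \<Rightarrow> ereal" and K :: "'b set"
  assumes lsc: "lscr V" and V0: "\<And>y. 0 \<le> V y"
    and NV: "\<And>y. ereal (V y) \<le> N y" and NVeq: "\<And>y. V y < B \<Longrightarrow> N y = ereal (V y)"
    and K: "closed K" "K \<noteq> {}" and g: "g > 0"
    and ybmin: "\<And>y. V yb + infdist yb K + g * norm (yb - x) \<le> V y + infdist y K + g * norm (y - x)"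
    and B: "V yb + infdist yb K + g * norm (yb - x) < B"
  shows "\<exists>v \<zeta>. v \<in> basic_subdiff N yb \<and> \<zeta> \<in> trunc_normal yb K \<and> norm (v + \<zeta>) \<le> g"
proof -
  define M where "M = V yb + infdist yb K + g * norm (yb - x)"
  define \<kappa> :: "nat \<Rightarrow> real" where "\<kappa> k = real k + 1" for k
  have \<kappa>pos: "\<kappa> k > 0" "\<kappa> k \<ge> 1" for k by (auto simp: \<kappa>_def)
  define G where "G k a = infdist (fst (snd a)) K + g * norm (snd (snd a) - x)
     + \<kappa> k * ((norm (fst a - fst (snd a)))^2 + (norm (fst a - snd (snd a)))^2) + (norm (fst a - yb))^2"
    for k and a :: "'b \<times> 'b \<times> 'b"
  define \<Phi> where "\<Phi> k a = V (fst a) + G k a" for k a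
  have M0: "0 \<le> M" using V0[of yb] g by (simp add: M_def infdist_nonneg)
  have \<Phi>a0: "\<Phi> k (yb,yb,yb) = M" for k by (simp add: \<Phi>_def G_def M_def)
  have G0: "0 \<le> G k a" for k a using g \<kappa>pos[of k] by (simp add: G_def infdist_nonneg)
  have \<Phi>0: "0 \<le> \<Phi> k a" for k a using V0 G0 by (simp add: \<Phi>_def add_nonneg_nonneg)
  define R where "R = 2 * sqrt M"
  define S where "S = cball yb R \<times> cball yb R \<times> cball yb R"
  have Scomp: "compact S" by (simp add: S_def compact_Times)
  have bnds: "norm (fst a - yb) \<le> sqrt M \<and> norm (fst a - fst (snd a)) \<le> sqrt M \<and> norm (fst a - snd (snd a)) \<le> sqrt M"
    if "\<Phi> k a \<le> M" for k a
  proof -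
    have h: "V (fst a) + infdist (fst (snd a)) K + g * norm (snd (snd a) - x) \<ge> 0"
      using V0 g by (simp add: infdist_nonneg)
    have "(norm (fst a - yb))^2 \<le> M" "\<kappa> k * (norm (fst a - fst (snd a)))^2 \<le> M"
         "\<kappa> k * (norm (fst a - snd (snd a)))^2 \<le> M"
    proof -
      have "0 \<le> (norm (fst a - yb))^2" "0 \<le> \<kappa> k * (norm (fst a - fst (snd a)))^2"
        "0 \<le> \<kappa> k * (norm (fst a - snd (snd a)))^2" using \<kappa>pos[of k] by auto
      moreover have "V (fst a) + infdist (fst (snd a)) K + g * norm (snd (snd a) - x)
        + (\<kappa> k * (norm (fst a - fst (snd a)))^2 + \<kappa> k * (norm (fst a - snd (snd a)))^2) + (norm (fst a - yb))^2 \<le> M"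
        using that unfolding \<Phi>_def G_def by (simp add: distrib_left)
      ultimately show "(norm (fst a - yb))^2 \<le> M" "\<kappa> k * (norm (fst a - fst (snd a)))^2 \<le> M"
         "\<kappa> k * (norm (fst a - snd (snd a)))^2 \<le> M" using h by linarith+
    qed
    moreover have "(norm (fst a - fst (snd a)))^2 \<le> \<kappa> k * (norm (fst a - fst (snd a)))^2"
         "(norm (fst a - snd (snd a)))^2 \<le> \<kappa> k * (norm (fst a - snd (snd a)))^2"
      using mult_right_mono[OF \<kappa>pos(2)[of k], of "(norm (fst a - fst (snd a)))^2"]
        mult_right_mono[OF \<kappa>pos(2)[of k], of "(norm (fst a - snd (snd a)))^2"] by auto
    ultimately show ?thesis by (meson order_trans real_le_rsqrt)
  qed
  have sub: "{a. \<Phi> k a \<le> \<Phi> k (yb,yb,yb)} \<subseteq> S" for k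
  proof
    fix a assume "a \<in> {a. \<Phi> k a \<le> \<Phi> k (yb,yb,yb)}"
    then have "\<Phi> k a \<le> M" using \<Phi>a0 by simp
    from bnds[OF this] have "norm (fst a - yb) \<le> sqrt M" "norm (fst a - fst (snd a)) \<le> sqrt M"
      "norm (fst a - snd (snd a)) \<le> sqrt M" by auto
    moreover have "norm (fst (snd a) - yb) \<le> norm (fst a - fst (snd a)) + norm (fst a - yb)"
      by (metis norm_diff_triangle_le norm_minus_commute order_refl)
    moreover have "norm (snd (snd a) - yb) \<le> norm (fst a - snd (snd a)) + norm (fst a - yb)"
      by (metis norm_diff_triangle_le norm_minus_commute order_refl)
    moreover have sq: "sqrt M \<ge> 0" using M0 by simp
    ultimately have "norm (fst a - yb) \<le> 2 * sqrt M" "norm (fst (snd a) - yb) \<le> 2 * sqrt M"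
      "norm (snd (snd a) - yb) \<le> 2 * sqrt M" by linarith+
    then show "a \<in> S" unfolding S_def R_def
      by (cases a) (simp add: dist_norm norm_minus_commute)
  qed
  have lscPhi: "lscr (\<Phi> k)" for k
  proof -
    have "continuous_on UNIV (G k)" unfolding G_def by (intro continuous_intros)
    then show ?thesis unfolding \<Phi>_def[abs_def]
      using lscr_add_cont[OF lscr_comp[OF lsc, of fst]] by (simp add: continuous_on_fst continuous_on_id)
  qed
  have "\<forall>k. \<exists>a. \<forall>b. \<Phi> k a \<le> \<Phi> k b"
    using lscr_min[OF lscPhi \<Phi>0 Scomp sub] by blast
  then obtain Z where Z: "\<And>k b. \<Phi> k (Z k) \<le> \<Phi> k b" by metis
  define y where "y k = fst (Z k)" for k
  define w where "w k = fst (snd (Z k))" for k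
  define u where "u k = snd (snd (Z k))" for k
  have ZM: "\<Phi> k (Z k) \<le> M" for k using Z[of k "(yb,yb,yb)"] \<Phi>a0 by simp
  have Zexp: "\<Phi> k (Z k) = V (y k) + infdist (w k) K + g * norm (u k - x)
     + \<kappa> k * ((norm (y k - w k))^2 + (norm (y k - u k))^2) + (norm (y k - yb))^2" for k
    by (simp add: \<Phi>_def G_def y_def w_def u_def)
  have Zexp2: "\<Phi> k (a, b, c) = V a + infdist b K + g * norm (c - x)
     + \<kappa> k * ((norm (a - b))^2 + (norm (a - c))^2) + (norm (a - yb))^2" for k a b c
    by (simp add: \<Phi>_def G_def)
  define h where "h k = M - infdist (w k) K - g * norm (u k - x) - (norm (y k - yb))^2" for k
  have Vh: "V (y k) \<le> h k" for k
  proof -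
    have "0 \<le> \<kappa> k * ((norm (y k - w k))^2 + (norm (y k - u k))^2)" using \<kappa>pos[of k] by simp
    then show ?thesis using ZM[of k] unfolding Zexp h_def by linarith
  qed
  have VB: "V (y k) < B" for k
  proof -
    have "0 \<le> infdist (w k) K" "0 \<le> g * norm (u k - x)" "0 \<le> (norm (y k - yb))^2"
      using g by (auto simp: infdist_nonneg)
    then have "h k \<le> M" unfolding h_def by linarith
    then show ?thesis using Vh[of k] B M_def by linarith
  qed
  have pen1: "\<kappa> k * (norm (y k - w k))^2 \<le> M" and pen2: "\<kappa> k * (norm (y k - u k))^2 \<le> M" for k
  proof -
    have "0 \<le> V (y k) + infdist (w k) K + g * norm (u k - x)" using V0 g by (simp add: infdist_nonneg)
    then show "\<kappa> k * (norm (y k - w k))^2 \<le> M" "\<kappa> k * (norm (y k - u k))^2 \<le> M"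
    proof -
      have "0 \<le> \<kappa> k * (norm (y k - w k))^2" "0 \<le> \<kappa> k * (norm (y k - u k))^2" "0 \<le> (norm (y k - yb))^2"
        using \<kappa>pos[of k] by auto
      moreover have "V (y k) + infdist (w k) K + g * norm (u k - x)
     + (\<kappa> k * (norm (y k - w k))^2 + \<kappa> k * (norm (y k - u k))^2) + (norm (y k - yb))^2 \<le> M"
        using ZM[of k] unfolding Zexp by (simp add: distrib_left)
      ultimately show "\<kappa> k * (norm (y k - w k))^2 \<le> M" "\<kappa> k * (norm (y k - u k))^2 \<le> M"
        using \<open>0 \<le> V (y k) + infdist (w k) K + g * norm (u k - x)\<close> by linarith+
    qed
  qed
  define vv where "vv k = - (2 * \<kappa> k) *\<^sub>R (y k - w k) - (2 * \<kappa> k) *\<^sub>R (y k - u k) - 2 *\<^sub>R (y k - yb)" for k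
  define \<sigma> where "\<sigma> k = 2 * \<kappa> k + 1" for k
  define \<zeta>s where "\<zeta>s k = (2 * \<kappa> k) *\<^sub>R (y k - w k)" for k
  define \<eta>s where "\<eta>s k = (2 * \<kappa> k) *\<^sub>R (y k - u k)" for k
  have proxV: "V (y k) + vv k \<bullet> (y' - y k) - \<sigma> k * (norm (y' - y k))^2 \<le> V y'" for k y'
  proof -
    have m: "\<Phi> k (Z k) \<le> \<Phi> k (y', w k, u k)" by (rule Z)
    define d where "d = y' - y k"
    have s1: "\<kappa> k * ((norm (y k - w k))^2 - (norm (y' - w k))^2) = -2*\<kappa> k*((y k - w k) \<bullet> d) - \<kappa> k * (norm d)^2"
      unfolding sqdiff d_def by (simp add: algebra_simps)
    have s2: "\<kappa> k * ((norm (y k - u k))^2 - (norm (y' - u k))^2) = -2*\<kappa> k*((y k - u k) \<bullet> d) - \<kappa> k * (norm d)^2"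
      unfolding sqdiff d_def by (simp add: algebra_simps)
    have s3: "(norm (y k - yb))^2 - (norm (y' - yb))^2 = -2*((y k - yb) \<bullet> d) - (norm d)^2"
      unfolding sqdiff d_def by (simp add: algebra_simps)
    have vd: "vv k \<bullet> d = -2*\<kappa> k*((y k - w k) \<bullet> d) - 2*\<kappa> k*((y k - u k) \<bullet> d) - 2*((y k - yb) \<bullet> d)"
      by (simp add: vv_def inner_diff_left)
    have sg: "\<sigma> k * (norm d)^2 = 2 * \<kappa> k * (norm d)^2 + (norm d)^2" by (simp add: \<sigma>_def algebra_simps)
    show ?thesis using m s1 s2 s3 vd sg unfolding Zexp Zexp2 d_def[symmetric]
      by (simp add: algebra_simps)
  qed
  have proxW: "infdist (w k) K + \<zeta>s k \<bullet> (w' - w k) - \<kappa> k * (norm (w' - w k))^2 \<le> infdist w' K" for k w'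
  proof -
    have m: "\<Phi> k (Z k) \<le> \<Phi> k (y k, w', u k)" by (rule Z)
    have s1: "\<kappa> k * ((norm (w k - y k))^2 - (norm (w' - y k))^2) = -2*\<kappa> k*((w k - y k) \<bullet> (w' - w k)) - \<kappa> k * (norm (w' - w k))^2"
      unfolding sqdiff by (simp add: algebra_simps)
    have z: "\<zeta>s k \<bullet> (w' - w k) = -2*\<kappa> k*((w k - y k) \<bullet> (w' - w k))"
      by (simp add: \<zeta>s_def inner_diff_left algebra_simps)
    show ?thesis using m s1 z unfolding Zexp Zexp2
      by (simp add: algebra_simps norm_minus_commute)
  qed
  have proxU: "g * norm (u k - x) + \<eta>s k \<bullet> (u' - u k) - \<kappa> k * (norm (u' - u k))^2 \<le> g * norm (u' - x)" for k u'
  proof -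
    have m: "\<Phi> k (Z k) \<le> \<Phi> k (y k, w k, u')" by (rule Z)
    have s1: "\<kappa> k * ((norm (u k - y k))^2 - (norm (u' - y k))^2) = -2*\<kappa> k*((u k - y k) \<bullet> (u' - u k)) - \<kappa> k * (norm (u' - u k))^2"
      unfolding sqdiff by (simp add: algebra_simps)
    have z: "\<eta>s k \<bullet> (u' - u k) = -2*\<kappa> k*((u k - y k) \<bullet> (u' - u k))"
      by (simp add: \<eta>s_def inner_diff_left algebra_simps)
    show ?thesis using m s1 z unfolding Zexp Zexp2
      by (simp add: algebra_simps norm_minus_commute)
  qed
  have \<zeta>1: "norm (\<zeta>s k) \<le> 1" for k
  proof (rule lip_bound[where g="\<lambda>w. infdist w K" and w="w k" and \<sigma>="\<kappa> k"])
    show "0 < \<kappa> k" by (rule \<kappa>pos)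
    show "\<And>w'. infdist (w k) K + \<zeta>s k \<bullet> (w' - w k) - \<kappa> k * (norm (w' - w k))^2 \<le> infdist w' K" by (rule proxW)
    show "\<And>w'. infdist w' K - infdist (w k) K \<le> 1 * norm (w' - w k)"
    proof -
      fix w' show "infdist w' K - infdist (w k) K \<le> 1 * norm (w' - w k)"
        using infdist_triangle[of w' K "w k"] by (simp add: dist_norm)
    qed
  qed simp
  have \<eta>1: "norm (\<eta>s k) \<le> g" for k
  proof (rule lip_bound[where g="\<lambda>u. g * norm (u - x)" and w="u k" and \<sigma>="\<kappa> k"])
    show "0 < \<kappa> k" by (rule \<kappa>pos)
    show "\<And>u'. g * norm (u k - x) + \<eta>s k \<bullet> (u' - u k) - \<kappa> k * (norm (u' - u k))^2 \<le> g * norm (u' - x)" by (rule proxU)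
    show "\<And>u'. g * norm (u' - x) - g * norm (u k - x) \<le> g * norm (u' - u k)"
    proof -
      fix u'
      have "norm (u' - x) \<le> norm (u' - u k) + norm (u k - x)" using norm_triangle_ineq[of "u' - u k" "u k - x"] by simp
      then have "g * norm (u' - x) \<le> g * (norm (u' - u k) + norm (u k - x))" using g by (intro mult_left_mono) auto
      then show "g * norm (u' - x) - g * norm (u k - x) \<le> g * norm (u' - u k)"
        by (simp add: distrib_left)
    qed
  qed (use g in simp)
  have vsum: "vv k = - \<zeta>s k - \<eta>s k - 2 *\<^sub>R (y k - yb)" for k
    by (simp add: vv_def \<zeta>s_def \<eta>s_def)
  define Q where "Q k = (Z k, \<zeta>s k, \<eta>s k)" for k
  have QS: "\<forall>k. Q k \<in> S \<times> cball 0 1 \<times> cball 0 g"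
  proof
    fix k
    have "Z k \<in> S" using sub[of k] Z[of k "(yb,yb,yb)"] by blast
    then show "Q k \<in> S \<times> cball 0 1 \<times> cball 0 g" using \<zeta>1[of k] \<eta>1[of k] by (simp add: Q_def)
  qed
  have "compact (S \<times> cball (0::'b) 1 \<times> cball (0::'b) g)" using Scomp by (simp add: compact_Times)
  then obtain l r where l: "l \<in> S \<times> cball 0 1 \<times> cball 0 g" "strict_mono r" "(Q \<circ> r) \<longlonglongrightarrow> l"
    using seq_compactE[OF compact_imp_seq_compact QS] by metis
  obtain ys ws us \<zeta> \<eta> where lform: "l = ((ys, ws, us), \<zeta>, \<eta>)" by (metis prod.collapse)
  have Qc: "(\<lambda>j. Q (r j)) \<longlonglongrightarrow> l" using l(3) by (simp add: comp_def)
  have yc: "(\<lambda>j. y (r j)) \<longlonglongrightarrow> ys"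
    using tendsto_fst[OF tendsto_fst[OF Qc]] by (simp add: lform Q_def y_def)
  have wc: "(\<lambda>j. w (r j)) \<longlonglongrightarrow> ws"
    using tendsto_fst[OF tendsto_snd[OF tendsto_fst[OF Qc]]] by (simp add: lform Q_def w_def)
  have uc: "(\<lambda>j. u (r j)) \<longlonglongrightarrow> us"
    using tendsto_snd[OF tendsto_snd[OF tendsto_fst[OF Qc]]] by (simp add: lform Q_def u_def)
  have \<zeta>c: "(\<lambda>j. \<zeta>s (r j)) \<longlonglongrightarrow> \<zeta>"
    using tendsto_fst[OF tendsto_snd[OF Qc]] by (simp add: lform Q_def)
  have \<eta>c: "(\<lambda>j. \<eta>s (r j)) \<longlonglongrightarrow> \<eta>"
    using tendsto_snd[OF tendsto_snd[OF Qc]] by (simp add: lform Q_def)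
  have \<zeta>n: "norm \<zeta> \<le> 1" and \<eta>n: "norm \<eta> \<le> g" using l(1) by (auto simp: lform)
  have rj: "j \<le> r j" for j using seq_suble[OF l(2)] by simp
  have invc: "(\<lambda>j. inverse (real (Suc j))) \<longlonglongrightarrow> 0" by (rule LIMSEQ_inverse_real_of_nat)
  have kinv: "1 / \<kappa> (r j) \<le> inverse (real (Suc j))" for j
    using rj[of j] by (simp add: \<kappa>_def inverse_eq_divide frac_le)
  have dist0: "ys = ws" "ys = us"
  proof -
    have b1: "(norm (y (r j) - w (r j)))^2 \<le> M * inverse (real (Suc j))" 
     and b2: "(norm (y (r j) - u (r j)))^2 \<le> M * inverse (real (Suc j))" for j
    proof -
      have "(norm (y (r j) - w (r j)))^2 \<le> M / \<kappa> (r j)" "(norm (y (r j) - u (r j)))^2 \<le> M / \<kappa> (r j)"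
        using pen1[of "r j"] pen2[of "r j"] \<kappa>pos[of "r j"] by (auto simp: field_simps)
      moreover have "M / \<kappa> (r j) \<le> M * inverse (real (Suc j))"
        using mult_left_mono[OF kinv[of j] M0] by simp
      ultimately show "(norm (y (r j) - w (r j)))^2 \<le> M * inverse (real (Suc j))"
        "(norm (y (r j) - u (r j)))^2 \<le> M * inverse (real (Suc j))" by linarith+
    qed
    have mc: "(\<lambda>j. M * inverse (real (Suc j))) \<longlonglongrightarrow> 0" using tendsto_mult[OF tendsto_const invc, of M] by simp
    have c1: "(\<lambda>j. (norm (y (r j) - w (r j)))^2) \<longlonglongrightarrow> (norm (ys - ws))^2" by (intro tendsto_intros yc wc)
    have c2: "(\<lambda>j. (norm (y (r j) - u (r j)))^2) \<longlonglongrightarrow> (norm (ys - us))^2" by (intro tendsto_intros yc uc)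
    have "(norm (ys - ws))^2 \<le> 0"
      by (rule LIMSEQ_le[OF c1 mc]) (use b1 in auto)
    then show "ys = ws" by simp
    have "(norm (ys - us))^2 \<le> 0"
      by (rule LIMSEQ_le[OF c2 mc]) (use b2 in auto)
    then show "ys = us" by simp
  qed
  have hc: "(\<lambda>j. h (r j)) \<longlonglongrightarrow> M - infdist ys K - g * norm (ys - x) - (norm (ys - yb))^2"
  proof -
    have wc': "(\<lambda>j. w (r j)) \<longlonglongrightarrow> ys" and uc': "(\<lambda>j. u (r j)) \<longlonglongrightarrow> ys" using wc uc dist0 by auto
    show ?thesis unfolding h_def by (intro tendsto_intros yc wc' uc')
  qed
  have ysyb: "ys = yb"
  proof -
    have "V ys \<le> M - infdist ys K - g * norm (ys - x) - (norm (ys - yb))^2"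
      by (rule lscr_le_lim[OF lsc yc _ hc]) (rule Vh)
    then have "(norm (ys - yb))^2 \<le> 0" using ybmin[of ys] unfolding M_def by linarith
    then show ?thesis by simp
  qed
  have hc': "(\<lambda>j. h (r j)) \<longlonglongrightarrow> V yb" using hc ysyb by (simp add: M_def)
  have Vc: "(\<lambda>j. V (y (r j))) \<longlonglongrightarrow> V yb"
  proof (rule order_tendstoI)
    fix a assume "a < V yb"
    then show "\<forall>\<^sub>F j in sequentially. a < V (y (r j))" using lsc yc ysyb unfolding lscr_def by blast
  next
    fix a assume "V yb < a"
    then have "\<forall>\<^sub>F j in sequentially. h (r j) < a" using order_tendstoD(2)[OF hc'] by blast
    then show "\<forall>\<^sub>F j in sequentially. V (y (r j)) < a" by (rule eventually_mono) (use Vh le_less_trans in blast)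
  qed
  define v where "v = - \<zeta> - \<eta>"
  have vc: "(\<lambda>j. vv (r j)) \<longlonglongrightarrow> v"
  proof -
    have "(\<lambda>j. - \<zeta>s (r j) - \<eta>s (r j) - 2 *\<^sub>R (y (r j) - yb)) \<longlonglongrightarrow> - \<zeta> - \<eta> - 2 *\<^sub>R (ys - yb)"
      by (intro tendsto_intros \<zeta>c \<eta>c yc)
    then show ?thesis using ysyb by (simp add: vsum v_def)
  qed
  have vnorm: "norm (v + \<zeta>) \<le> g" using \<eta>n by (simp add: v_def)
  have "V yb \<le> M" using g by (simp add: M_def infdist_nonneg)
  then have NybV: "N yb = ereal (V yb)" using NVeq B M_def by simp
  have vsub: "v \<in> basic_subdiff N yb"
  proof -
    define t where "t j = 1 / (2 * \<sigma> (r j))" for j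
    define vs where "vs j = (vv (r j), -1::real)" for j
    define xs where "xs j = (y (r j), V (y (r j))) + t j *\<^sub>R (vv (r j), -1::real)" for j
    have tpos: "0 < t j" for j using \<kappa>pos[of "r j"] by (simp add: t_def \<sigma>_def)
    have tle: "t j \<le> inverse (real (Suc j))" for j
    proof -
      have "real (Suc j) \<le> 2 * \<sigma> (r j)" using rj[of j] by (simp add: \<sigma>_def \<kappa>_def)
      then show ?thesis unfolding t_def using tpos by (simp add: inverse_eq_divide frac_le)
    qed
    have tc: "t \<longlonglongrightarrow> 0"
    proof (rule tendsto_sandwich[OF _ _ tendsto_const invc])
      show "\<forall>\<^sub>F n in sequentially. 0 \<le> t n" using tpos by (simp add: less_imp_le)
      show "\<forall>\<^sub>F n in sequentially. t n \<le> inverse (real (Suc n))" using tle by simp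
    qed
    have xsc: "xs \<longlonglongrightarrow> (yb, V yb)"
    proof -
      have "(\<lambda>j. (y (r j), V (y (r j))) + t j *\<^sub>R (vv (r j), -1::real)) \<longlonglongrightarrow> (ys, V yb) + 0 *\<^sub>R (v, -1)"
        by (intro tendsto_intros yc Vc tc vc)
      then show ?thesis using ysyb by (simp add: xs_def[abs_def])
    qed
    have vsc: "vs \<longlonglongrightarrow> (v, -1)" unfolding vs_def by (intro tendsto_intros vc)
    have vsin: "vs j \<in> cone_gen {xs j - z | z. z \<in> proj_set (xs j) (epi N)}" for j
    proof -
      have "N (y (r j)) = ereal (V (y (r j)))" using NVeq VB by blast
      moreover have "2 * t j * \<sigma> (r j) \<le> 1" using \<kappa>pos[of "r j"] by (simp add: t_def \<sigma>_def)
      moreover have "ereal (V (y (r j)) + vv (r j) \<bullet> (y' - y (r j)) - \<sigma> (r j) * (norm (y' - y (r j)))^2) \<le> N y'" for y'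
        using proxV[of "r j" y'] NV[of y'] order_trans by (metis ereal_less_eq(3))
      ultimately show ?thesis unfolding vs_def xs_def using epi_prox[OF _ tpos] by blast
    qed
    have "(v, -1) \<in> basic_normal_cone (yb, V yb) (epi N)"
      unfolding basic_normal_cone_def using xsc vsc vsin by blast
    then show ?thesis unfolding basic_subdiff_def using NybV by simp
  qed
  have wcb: "(\<lambda>j. w (r j)) \<longlonglongrightarrow> yb" using wc dist0 ysyb by simp
  have outform: "\<exists>p. p \<in> proj_set (w k) K \<and> \<zeta>s k = (w k - p) /\<^sub>R infdist (w k) K" if "w k \<notin> K" for k
  proof -
    obtain p where p: "p \<in> K" "infdist (w k) K = dist (w k) p" using infdist_attains_inf[OF K] by metis
    then have pp: "p \<in> proj_set (w k) K" by (simp add: proj_set_def)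
    have "\<zeta>s k = (w k - p) /\<^sub>R infdist (w k) K"
      by (rule dist_prox_out[OF K(1) that \<kappa>pos(1) \<zeta>1 pp proxW])
    then show ?thesis using pp by blast
  qed
  have ztrunc: "\<zeta> \<in> trunc_normal yb K"
  proof (cases "yb \<in> K")
    case True
    define t where "t j = (if w (r j) \<in> K then 1 / (2 * \<kappa> (r j)) else 0)" for j
    define xs where "xs j = w (r j) + t j *\<^sub>R \<zeta>s (r j)" for j
    have t0: "0 \<le> t j" for j using \<kappa>pos[of "r j"] by (simp add: t_def)
    have tle: "t j \<le> inverse (real (Suc j))" for j
    proof -
      have "1 / (2 * \<kappa> (r j)) \<le> 1 / \<kappa> (r j)" using \<kappa>pos[of "r j"] by (simp add: frac_le)
      then show ?thesis using kinv[of j] by (simp add: t_def)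
    qed
    have "(\<lambda>j. xs j - w (r j)) \<longlonglongrightarrow> 0"
    proof (rule Lim_null_comparison[OF _ invc])
      show "\<forall>\<^sub>F j in sequentially. norm (xs j - w (r j)) \<le> inverse (real (Suc j))"
      proof (intro always_eventually allI)
        fix j
        have "norm (xs j - w (r j)) = t j * norm (\<zeta>s (r j))" using t0[of j] by (simp add: xs_def)
        also have "\<dots> \<le> t j * 1" using t0[of j] \<zeta>1[of "r j"] by (intro mult_left_mono) auto
        finally show "norm (xs j - w (r j)) \<le> inverse (real (Suc j))" using tle[of j] by simp
      qed
    qed
    from tendsto_add[OF this wcb] have xsc: "xs \<longlonglongrightarrow> yb" by simp
    have vsin: "\<zeta>s (r j) \<in> cone_gen {xs j - z | z. z \<in> proj_set (xs j) K}" for j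
    proof (cases "w (r j) \<in> K")
      case True
      have "\<zeta>s (r j) \<bullet> (z - w (r j)) \<le> \<kappa> (r j) * (norm (z - w (r j)))^2" if "z \<in> K" for z
        using proxW[of "r j" z] that True by simp
      moreover have "2 * (1 / (2 * \<kappa> (r j))) * \<kappa> (r j) \<le> 1" using \<kappa>pos[of "r j"] by simp
      moreover have "0 < 1 / (2 * \<kappa> (r j))" using \<kappa>pos[of "r j"] by simp
      ultimately have A: "\<zeta>s (r j) \<in> cone_gen {(w (r j) + (1 / (2 * \<kappa> (r j))) *\<^sub>R \<zeta>s (r j)) - z | z. z \<in> proj_set (w (r j) + (1 / (2 * \<kappa> (r j))) *\<^sub>R \<zeta>s (r j)) K}"
        by (intro set_prox[OF True]) auto
      have "xs j = w (r j) + (1 / (2 * \<kappa> (r j))) *\<^sub>R \<zeta>s (r j)" using True by (simp add: xs_def t_def)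
      then show ?thesis using A by (simp only:)
    next
      case False
      then obtain p where p: "p \<in> proj_set (w (r j)) K" "\<zeta>s (r j) = (w (r j) - p) /\<^sub>R infdist (w (r j)) K"
        using outform by blast
      have "0 \<le> 1 / infdist (w (r j)) K" by (simp add: infdist_nonneg)
      moreover have "xs j = w (r j)" using False by (simp add: xs_def t_def)
      moreover have "\<zeta>s (r j) = (1 / infdist (w (r j)) K) *\<^sub>R (w (r j) - p)" using p(2) by (simp add: divide_inverse_commute)
      ultimately have m: "w (r j) - p \<in> {xs j - z |z. z \<in> proj_set (xs j) K}"
        and eq: "\<zeta>s (r j) = (1 / infdist (w (r j)) K) *\<^sub>R (w (r j) - p)"
        and nn: "0 \<le> 1 / infdist (w (r j)) K" using p(1) by auto
      show ?thesis unfolding cone_gen_def mem_Collect_eq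
        by (rule exI[of _ "1 / infdist (w (r j)) K"], rule exI[of _ "w (r j) - p"]) (use m eq nn in blast)
    qed
    have "\<zeta> \<in> basic_normal_cone yb K"
      unfolding basic_normal_cone_def using xsc \<zeta>c vsin by blast
    then show ?thesis using True \<zeta>n by (simp add: trunc_normal_def)
  next
    case False
    define d where "d = infdist yb K"
    have dpos: "d > 0" using infdist_pos_not_in_closed[OF K(1) K(2) False] d_def by blast
    have "open (- K)" using K(1) by (simp add: open_Compl)
    then have ev: "\<forall>\<^sub>F j in sequentially. w (r j) \<in> - K"
      using topological_tendstoD[OF wcb] False by blast
    define P where "P j = w (r j) - infdist (w (r j)) K *\<^sub>R \<zeta>s (r j)" for j
    have ev2: "\<forall>\<^sub>F j in sequentially. P j \<in> K \<and> \<zeta>s (r j) \<in> sphere 0 1"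
    proof (rule eventually_mono[OF ev])
      fix j assume "w (r j) \<in> - K"
      then obtain p where p: "p \<in> proj_set (w (r j)) K" "\<zeta>s (r j) = (w (r j) - p) /\<^sub>R infdist (w (r j)) K"
        using outform by blast
      have pK: "p \<in> K" and dp: "dist (w (r j)) p = infdist (w (r j)) K" using p(1) by (auto simp: proj_set_def)
      have dj: "infdist (w (r j)) K > 0"
        using infdist_pos_not_in_closed[OF K(1)] K(2) \<open>w (r j) \<in> - K\<close> by auto
      have "P j = p" using dj by (simp add: P_def p(2))
      moreover have "norm (\<zeta>s (r j)) = 1" using dj dp by (simp add: p(2) dist_norm)
      ultimately show "P j \<in> K \<and> \<zeta>s (r j) \<in> sphere 0 1" using pK by simp
    qed
    have Pc: "P \<longlonglongrightarrow> yb - d *\<^sub>R \<zeta>" unfolding P_def d_def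
      by (intro tendsto_intros wcb \<zeta>c)
    have pK: "yb - d *\<^sub>R \<zeta> \<in> K"
      by (rule Lim_in_closed_set[OF K(1) _ _ Pc]) (use eventually_mono[OF ev2] in \<open>auto\<close>)
    have "\<zeta> \<in> sphere 0 1"
      by (rule Lim_in_closed_set[OF closed_sphere _ _ \<zeta>c]) (use eventually_mono[OF ev2] in \<open>auto\<close>)
    then have zn: "norm \<zeta> = 1" by simp
    have "dist yb (yb - d *\<^sub>R \<zeta>) = d" using zn dpos by (simp add: dist_norm)
    then have pp: "yb - d *\<^sub>R \<zeta> \<in> proj_set yb K" using pK by (simp add: proj_set_def d_def)
    have "\<zeta> = (yb - (yb - d *\<^sub>R \<zeta>)) /\<^sub>R infdist yb K" using dpos by (simp add: d_def)
    then have "\<exists>z. \<zeta> = (yb - z) /\<^sub>R infdist yb K \<and> z \<in> proj_set yb K" using pp by blast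
    then show ?thesis using False unfolding trunc_normal_def by simp
  qed
  show ?thesis using vsub ztrunc vnorm by blast
qed
lemma infdist_shift:
  fixes C :: "'c::euclidean_space set"
  assumes add: "\<And>a b. a \<in> C \<Longrightarrow> b \<in> C \<Longrightarrow> a + b \<in> C" and "c' \<in> C"
  shows "infdist v C \<le> infdist (v - c') C"
proof -
  have ne: "C \<noteq> {}" using assms(2) by auto
  have "infdist v C \<le> dist (v - c') w" if "w \<in> C" for w
  proof -
    have "infdist v C \<le> dist v (c' + w)" using add[OF assms(2) that] by (rule infdist_le)
    also have "dist v (c' + w) = dist (v - c') w" by (simp add: dist_norm algebra_simps)
    finally show ?thesis .
  qed
  then show ?thesis unfolding infdist_notempty[OF ne] by (intro cINF_greatest[OF ne]) auto
qed

lemma infdist_lsc_usc: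
  fixes C :: "'c::euclidean_space set" and h :: "'b::euclidean_space \<Rightarrow> 'c"
  assumes add: "\<And>a b. a \<in> C \<Longrightarrow> b \<in> C \<Longrightarrow> a + b \<in> C"
    and usc: "C_usc_at C h y" and ys: "ys \<longlonglongrightarrow> y" and c: "c < infdist (h y) C"
  shows "\<forall>\<^sub>F j in sequentially. c < infdist (h (ys j)) C"
proof -
  define e where "e = infdist (h y) C - c"
  have e: "e > 0" using c by (simp add: e_def)
  have H: "open (ball (h y) e) \<and> h y \<in> ball (h y) e" using e by simp
  have "\<exists>U. open U \<and> y \<in> U \<and> (\<forall>x\<in>U. h x \<in> {v - c' | v c'. v \<in> ball (h y) e \<and> c' \<in> C})"
    using mp[OF spec[OF usc[unfolded C_usc_at_def], of "ball (h y) e"] H] .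
  then obtain U where U: "open U" "y \<in> U" "\<forall>x\<in>U. h x \<in> {v - c' | v c'. v \<in> ball (h y) e \<and> c' \<in> C}"
    by (elim exE conjE) (rule that)
  have ev: "\<forall>\<^sub>F j in sequentially. ys j \<in> U" using topological_tendstoD[OF ys U(1,2)] .
  show ?thesis
  proof (rule eventually_mono[OF ev])
    fix j assume "ys j \<in> U"
    then have "h (ys j) \<in> {v - c' | v c'. v \<in> ball (h y) e \<and> c' \<in> C}" using U(3) by (rule bspec[rotated])
    then obtain v c' where vc: "h (ys j) = v - c'" "v \<in> ball (h y) e" "c' \<in> C" unfolding mem_Collect_eq by (elim exE conjE) (rule that)
    have t1: "infdist (h y) C \<le> infdist v C + dist (h y) v" by (rule infdist_triangle)
    have t2: "infdist v C \<le> infdist (v - c') C" by (rule infdist_shift[OF add vc(3)])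
    have t3: "dist (h y) v < e" using vc(2) by simp
    show "c < infdist (h (ys j)) C" unfolding vc(1) using t1 t2 t3 e_def by linarith
  qed
qed

theorem mainTheorem9:
  fixes C :: "'c::euclidean_space set"
    and K :: "'a::euclidean_space \<Rightarrow> 'b::euclidean_space set"
    and f :: "'a \<Rightarrow> 'b \<Rightarrow> 'b \<Rightarrow> 'c"
    and \<xi>bar \<xi> :: 'a and xbar :: 'b and \<rho> \<gamma> :: real
  assumes C_closed: "closed C" and C_convex: "convex C" and C_pointed: "pointed_cone C"
    and C_nontriv: "C \<noteq> {0}"
    and K_graph: "closed {(\<eta>, x). x \<in> K \<eta>}"
    and K_ne: "\<And>\<eta>. K \<eta> \<noteq> {}"
    and gph: "xbar \<in> VEP_sol C K f \<xi>bar"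
    and rho: "\<rho> > 0"
    and xi: "\<xi> \<in> cball \<xi>bar \<rho>"
    and usc: "\<And>z x. z \<in> K \<xi> \<Longrightarrow> C_usc_at C (\<lambda>y. f \<xi> y z) x"
    and x0: "\<exists>x0 \<in> K \<xi>. C_bounded C ((\<lambda>z. f \<xi> x0 z) ` K \<xi>)"
    and gamma_pos: "\<gamma> > 0"
    and gamma: "\<And>x. x \<notin> VEP_sol C K f \<xi> \<Longrightarrow>
         {u + w | u w. u \<in> basic_subdiff (gap_nu C K f \<xi>) x \<and> w \<in> trunc_normal x (K \<xi>)}
           \<inter> cball 0 \<gamma> = {}"
  shows "VEP_sol C K f \<xi> \<noteq> {} \<and>
         (\<forall>x. ereal (infdist x (VEP_sol C K f \<xi>)) \<le> gap_m C K f \<xi> x / ereal \<gamma>)"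
proof -
  define E where "E = VEP_sol C K f \<xi>"
  define Nu where "Nu = gap_nu C K f \<xi>"
  define Kx where "Kx = K \<xi>"
  have Nu_def': "Nu y = (SUP z\<in>Kx. ereal (infdist (f \<xi> y z) C))" for y
    by (simp add: Nu_def Kx_def gap_nu_def)
  have "K \<xi> = (\<lambda>x. (\<xi>, x)) -` {(\<eta>, x). x \<in> K \<eta>}" by auto
  moreover have "closed ((\<lambda>x. (\<xi>, x)) -` {(\<eta>, x). x \<in> K \<eta>})"
    by (rule continuous_closed_vimage[OF K_graph]) (intro continuous_intros)
  ultimately have Kcl: "closed Kx" by (simp add: Kx_def)
  have Kne: "Kx \<noteq> {}" using K_ne by (simp add: Kx_def)
  have coneC: "cone C" and C0: "0 \<in> C" using C_pointed unfolding pointed_cone_def by auto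
  have Cadd: "a + b \<in> C" if "a \<in> C" "b \<in> C" for a b
    using convex_cone[of C] C_convex coneC that by blast
  have Nu0: "0 \<le> Nu y" for y
  proof -
    obtain z where z: "z \<in> Kx" using Kne by auto
    have "ereal 0 \<le> ereal (infdist (f \<xi> y z) C)" by (simp add: infdist_nonneg)
    also have "\<dots> \<le> Nu y" unfolding Nu_def' using z by (rule SUP_upper)
    finally show ?thesis by (simp add: zero_ereal_def)
  qed
  have Nulsc: "\<forall>\<^sub>F j in sequentially. ereal c < Nu (ys j)" if ys: "ys \<longlonglongrightarrow> y" and c: "ereal c < Nu y" for ys y c
  proof -
    obtain z where z: "z \<in> Kx" "ereal c < ereal (infdist (f \<xi> y z) C)"
      using c unfolding Nu_def' less_SUP_iff by blast
    have "\<forall>\<^sub>F j in sequentially. c < infdist (f \<xi> (ys j) z) C"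
      using infdist_lsc_usc[OF Cadd usc[of z y] ys] z by (simp add: Kx_def)
    then show ?thesis
    proof (rule eventually_mono)
      fix j assume "c < infdist (f \<xi> (ys j) z) C"
      then have "ereal c < ereal (infdist (f \<xi> (ys j) z) C)" by simp
      also have "\<dots> \<le> Nu (ys j)" unfolding Nu_def' using z(1) by (rule SUP_upper)
      finally show "ereal c < Nu (ys j)" .
    qed
  qed
  have bound: "\<exists>e\<in>E. g' * dist x e \<le> a + infdist x Kx"
    if g': "0 < g'" "g' < \<gamma>" and Nux: "Nu x = ereal a" for x g' a
  proof -
    have a0: "0 \<le> a" using Nu0[of x] Nux by simp
    define B where "B = a + infdist x Kx + 1"
    have Bpos: "0 < B" using a0 by (simp add: B_def infdist_nonneg add_nonneg_pos)
    define V where "V y = (if Nu y < ereal B then real_of_ereal (Nu y) else B)" for y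
    have VNu1: "Nu y = ereal (V y)" if "Nu y < ereal B" for y
      using that Nu0[of y] by (cases "Nu y") (auto simp: V_def)
    have V0: "0 \<le> V y" for y
      using Nu0[of y] Bpos by (cases "Nu y") (auto simp: V_def)
    have NV: "ereal (V y) \<le> Nu y" for y
      using VNu1[of y] by (cases "Nu y < ereal B") (auto simp: V_def)
    have NVeq: "Nu y = ereal (V y)" if "V y < B" for y
      using that VNu1[of y] by (cases "Nu y < ereal B") (auto simp: V_def)
    have VltB: "V y < B" if "Nu y < ereal B" for y
      using that VNu1[of y] by auto
    have "Nu x < ereal B" using infdist_nonneg[of x Kx] by (simp add: Nux B_def)
    then have Vx: "V x = a" using VNu1[of x] Nux by simp
    have key1: "ereal c < Nu y \<and> c < B" if "c < V y" for c y
    proof (cases "Nu y < ereal B")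
      case True
      then show ?thesis using that VNu1[of y] VltB[OF True] by auto
    next
      case False
      then have "V y = B" "ereal B \<le> Nu y" by (auto simp: V_def)
      then have "c < B" using that by simp
      then have "ereal c < ereal B" by simp
      then show ?thesis using less_le_trans[OF \<open>ereal c < ereal B\<close> \<open>ereal B \<le> Nu y\<close>] \<open>c < B\<close> by simp
    qed
    have key2: "c < V y" if "ereal c < Nu y" "c < B" for c y
    proof (cases "Nu y < ereal B")
      case True
      then show ?thesis using that VNu1[of y] by auto
    next
      case False
      then show ?thesis using that by (simp add: V_def)
    qed
    have lscV: "lscr V" unfolding lscr_def
    proof (intro allI impI)
      fix ys y c assume ys: "ys \<longlonglongrightarrow> y" and c: "c < V y"
      from key1[OF c] have "ereal c < Nu y" "c < B" by auto
      from Nulsc[OF ys this(1)] show "\<forall>\<^sub>F j in sequentially. c < V (ys j)"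
        by (rule eventually_mono) (erule key2[OF _ \<open>c < B\<close>])
    qed
    define \<psi> where "\<psi> y = V y + (infdist y Kx + g' * norm (y - x))" for y
    have lscpsi: "lscr \<psi>" unfolding \<psi>_def[abs_def]
      by (rule lscr_add_cont[OF lscV]) (intro continuous_intros)
    have psi0: "0 \<le> \<psi> y" for y using V0[of y] g' by (simp add: \<psi>_def infdist_nonneg)
    have psix: "\<psi> x = a + infdist x Kx" by (simp add: \<psi>_def Vx)
    have psig: "g' * norm (y - x) \<le> \<psi> y" for y using V0[of y] by (simp add: \<psi>_def infdist_nonneg)
    have sub: "{y. \<psi> y \<le> \<psi> x} \<subseteq> cball x (\<psi> x / g')"
    proof
      fix y assume "y \<in> {y. \<psi> y \<le> \<psi> x}"
      then have "g' * norm (y - x) \<le> \<psi> x" using psig[of y] by simp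
      then have "norm (y - x) \<le> \<psi> x / g'" using g' by (simp add: field_simps)
      then show "y \<in> cball x (\<psi> x / g')" by (simp add: dist_norm norm_minus_commute)
    qed
    obtain yb where yb: "\<And>b. \<psi> yb \<le> \<psi> b" using lscr_min[OF lscpsi psi0 compact_cball sub] by blast
    show ?thesis
    proof (cases "yb \<in> E")
      case True
      have "g' * dist x yb \<le> \<psi> yb" using psig[of yb] by (simp add: dist_norm norm_minus_commute)
      also have "\<dots> \<le> \<psi> x" by (rule yb)
      finally have "g' * dist x yb \<le> a + infdist x Kx" using psix by simp
      then show ?thesis using True by blast
    next
      case False
      have ybmin: "V yb + infdist yb Kx + g' * norm (yb - x) \<le> V y + infdist y Kx + g' * norm (y - x)" for y
        using yb[of y] by (simp add: \<psi>_def add.assoc)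
      have "\<psi> yb < B" using yb[of x] psix by (simp add: B_def)
      then have Bb: "V yb + infdist yb Kx + g' * norm (yb - x) < B" by (simp add: \<psi>_def add.assoc)
      obtain v \<zeta> where v: "v \<in> basic_subdiff Nu yb" "\<zeta> \<in> trunc_normal yb Kx" "norm (v + \<zeta>) \<le> g'"
        using penalty[OF lscV V0 NV NVeq Kcl Kne g'(1) ybmin Bb] by blast
      have "v + \<zeta> \<in> {u + w | u w. u \<in> basic_subdiff (gap_nu C K f \<xi>) yb \<and> w \<in> trunc_normal yb (K \<xi>)}"
        using v(1,2) unfolding Nu_def Kx_def by blast
      moreover have "v + \<zeta> \<in> cball 0 \<gamma>" using v(3) g' by simp
      moreover have "{u + w | u w. u \<in> basic_subdiff (gap_nu C K f \<xi>) yb \<and> w \<in> trunc_normal yb (K \<xi>)}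
           \<inter> cball 0 \<gamma> = {}" using gamma[of yb] False by (simp add: E_def)
      ultimately have False by blast
      then show ?thesis by simp
    qed
  qed
  obtain x0 where x0K: "x0 \<in> Kx" and x0b: "bounded ((\<lambda>z. f \<xi> x0 z) ` Kx - C)"
    using x0 by (auto simp: C_bounded_def Kx_def)
  obtain R where R: "\<And>q. q \<in> (\<lambda>z. f \<xi> x0 z) ` Kx - C \<Longrightarrow> norm q \<le> R"
    using x0b unfolding bounded_iff by blast
  have "Nu x0 \<le> ereal (max 0 R)" unfolding Nu_def'
  proof (rule SUP_least)
    fix z assume z: "z \<in> Kx"
    have "infdist (f \<xi> x0 z) C \<le> max 0 R"
    proof (cases "f \<xi> x0 z \<in> C")
      case True then show ?thesis by simp
    next
      case False
      have "infdist (f \<xi> x0 z) C \<le> dist (f \<xi> x0 z) 0" using C0 by (rule infdist_le)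
      also have "\<dots> \<le> R" using R[of "f \<xi> x0 z"] False z by auto
      finally show ?thesis by simp
    qed
    then show "ereal (infdist (f \<xi> x0 z) C) \<le> ereal (max 0 R)" by (rule ereal_less_eq(3)[THEN iffD2])
  qed
  moreover have "ereal (max 0 R) < \<infinity>" by (simp only: less_ereal.simps(4))
  ultimately have "Nu x0 < \<infinity>" by (rule le_less_trans)
  then obtain a0 where a0: "Nu x0 = ereal a0" using Nu0[of x0] by (cases "Nu x0") auto
  have "\<exists>e\<in>E. (\<gamma>/2) * dist x0 e \<le> a0 + infdist x0 Kx"
    by (rule bound[OF _ _ a0]) (use gamma_pos in auto)
  then have Ene: "E \<noteq> {}" by auto
  have "ereal (infdist x E) \<le> gap_m C K f \<xi> x / ereal \<gamma>" for x
  proof -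
    have gm: "gap_m C K f \<xi> x = Nu x + ereal (infdist x Kx)"
      by (simp add: gap_m_def gap_mu_def Nu_def Kx_def)
    show ?thesis
    proof (cases "Nu x")
      case PInf
      then show ?thesis using gamma_pos by (simp add: gm)
    next
      case MInf
      then show ?thesis using Nu0[of x] by simp
    next
      case (real a)
      have a0: "0 \<le> a" using Nu0[of x] real by simp
      define D where "D = infdist x E"
      define P where "P = a + infdist x Kx"
      have P0: "0 \<le> P" using a0 by (simp add: P_def infdist_nonneg)
      have H: "g' * D \<le> P" if gg: "0 < g'" "g' < \<gamma>" for g'
      proof -
        obtain e where e: "e \<in> E" "g' * dist x e \<le> P" using bound[OF gg real] by (auto simp: P_def)
        have "D \<le> dist x e" unfolding D_def using e(1) by (rule infdist_le)
        then have "g' * D \<le> g' * dist x e" using gg by (intro mult_left_mono) auto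
        then show ?thesis using e(2) by linarith
      qed
      have DP: "D \<le> P / \<gamma>"
      proof (rule ccontr)
        assume "\<not> D \<le> P / \<gamma>"
        then have lt: "P < D * \<gamma>" using gamma_pos by (simp add: field_simps)
        have "0 \<le> D" by (simp add: D_def infdist_nonneg)
        then have Dpos: "D > 0" using lt P0 by (cases "D = 0") auto
        define g' where "g' = (\<gamma> + P / D) / 2"
        have PD: "P / D < \<gamma>" using lt Dpos by (simp add: field_simps)
        have PD0: "0 \<le> P / D" using P0 Dpos by simp
        have "0 < g'" "g' < \<gamma>" using PD PD0 gamma_pos by (simp_all add: g'_def field_simps)
        moreover have "P < g' * D"
        proof -
          have "2 * g' = \<gamma> + P / D" by (simp add: g'_def)
          then have "P / D < g'" using PD by linarith
          then show ?thesis using Dpos by (simp add: field_simps)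
        qed
        ultimately have "P < g' * D" "g' * D \<le> P" using H by auto
        then show False by linarith
      qed
      have "gap_m C K f \<xi> x / ereal \<gamma> = ereal (P / \<gamma>)"
        using gamma_pos by (simp add: gm real P_def)
      then show ?thesis using DP by (simp add: D_def)
    qed
  qed
  then show ?thesis using Ene by (simp add: E_def)
qed

end
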